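(* Let $A$ be an $N\times N$ $\{0,1\}$-matrix with no zero row and no zero column, and let $\tau_+,\tau_-:\mathcal{V}_A\to\Omega_A$ satisfy the cylinder condition. For $i=1,\dots,N$ put $\mathfrak{s}_i:=\mathfrak{s}_{i,\tau_+}\oplus\mathfrak{s}_{i,\tau_-}$ on $\ell^2(\mathcal{V}_A,\mathbb{C}^2)$. Then: (1) $\mathfrak{s}_i$ and $\mathfrak{s}_i^*$ preserve $C_c(\mathcal{V}_A,\mathbb{C}^2)$; (2) for each $s\in(0,1]$, $\mathfrak{s}_i$ and $\mathfrak{s}_i^*$ have bounded commutators with $D_{\mathcal{V},s}$; (3) there is a sequence $(f_k)\subseteq C_c(\mathcal{V}_A,\mathbb{C}^2)$ with $\|f_k\|=1$ and $\|[D^{BP}_{\mathcal{V}},\mathfrak{s}_i]f_k\|\to\infty$.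
   Context: $\mathcal{V}_A$: admissible finite words ($A_{\mu_j\mu_{j+1}}=1$) including the empty word $\circ$; $\Omega_A$: infinite admissible sequences; $C_\mu$: cylinder set of sequences starting with $\mu$. $\mathfrak t:\mathcal{V}_A\to\Omega_A$ satisfies the cylinder condition if $\mathfrak t(\mu)\in C_\mu$ for all $\mu$. $\pi_{\mathfrak t}(f)\delta_\mu=f(\mathfrak t(\mu))\delta_\mu$ for $f\in C(\Omega_A)$. $\sigma_{\mathcal V}(\mu_1\mu_2\cdots\mu_k)=\mu_2\cdots\mu_k$; $V_\sigma\in\mathbb{B}(\ell^2(\mathcal{V}_A))$ is $(V_\sigma f)(v)=f(\sigma_{\mathcal V}(v))$ for $v\ne\circ$ and $(V_\sigma f)(\circ)=0$; $\mathfrak{s}_{i,\mathfrak t}:=\pi_{\mathfrak t}(\chi_{C_i})V_\sigma$. On $\ell^2(\mathcal{V}_A,\mathbb{C}^2)=\ell^2(\mathcal{V}_A)\oplus\ell^2(\mathcal{V}_A)$: $D_{\mathcal{V},s}(\phi_+,\phi_-)(\mu)=|\mu|^s(\phi_-(\mu),\phi_+(\mu))$ and $D^{BP}_{\mathcal V}(\phi_+,\phi_-)(\mu)=e^{|\mu|}(\phi_-(\mu),\phi_+(\mu))$, self-adjoint closures from $C_c(\mathcal{V}_A,\mathbb{C}^2)$. *)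

theory Defs
  imports "HOL-Analysis.Analysis"
begin

text \<open>Alphabet: letters 1..N; the N x N {0,1}-matrix A is a function nat => nat => nat
  (only entries with indices in 1..N matter). Finite words are lists, the empty word is [].\<close>

definition adm_words :: "nat \<Rightarrow> (nat \<Rightarrow> nat \<Rightarrow> nat) \<Rightarrow> nat list set" where
  "adm_words N A = {\<mu>. set \<mu> \<subseteq> {1..N} \<and>
      (\<forall>j. Suc j < length \<mu> \<longrightarrow> A (\<mu> ! j) (\<mu> ! Suc j) = 1)}"

definition adm_seqs :: "nat \<Rightarrow> (nat \<Rightarrow> nat \<Rightarrow> nat) \<Rightarrow> (nat \<Rightarrow> nat) set" where
  "adm_seqs N A = {x. (\<forall>k. x k \<in> {1..N}) \<and> (\<forall>k. A (x k) (x (Suc k)) = 1)}"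

definition cyl :: "nat \<Rightarrow> (nat \<Rightarrow> nat \<Rightarrow> nat) \<Rightarrow> nat list \<Rightarrow> (nat \<Rightarrow> nat) set" where
  "cyl N A \<mu> = {x \<in> adm_seqs N A. \<forall>j<length \<mu>. x j = \<mu> ! j}"

definition cylinder_condition ::
  "nat \<Rightarrow> (nat \<Rightarrow> nat \<Rightarrow> nat) \<Rightarrow> (nat list \<Rightarrow> nat \<Rightarrow> nat) \<Rightarrow> bool" where
  "cylinder_condition N A t \<longleftrightarrow> (\<forall>\<mu>\<in>adm_words N A. t \<mu> \<in> cyl N A \<mu>)"

text \<open>Operators on l^2(V_A): functions nat list => complex vanishing off V_A.\<close>

definition V_sigma :: "nat \<Rightarrow> (nat \<Rightarrow> nat \<Rightarrow> nat) \<Rightarrow> (nat list \<Rightarrow> complex) \<Rightarrow> nat list \<Rightarrow> complex" where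
  "V_sigma N A f v = (if v \<in> adm_words N A \<and> v \<noteq> [] then f (tl v) else 0)"

definition pi_t :: "(nat list \<Rightarrow> nat \<Rightarrow> nat) \<Rightarrow> ((nat \<Rightarrow> nat) \<Rightarrow> complex)
    \<Rightarrow> (nat list \<Rightarrow> complex) \<Rightarrow> nat list \<Rightarrow> complex" where
  "pi_t t g \<phi> \<mu> = g (t \<mu>) * \<phi> \<mu>"

definition s_op :: "nat \<Rightarrow> (nat \<Rightarrow> nat \<Rightarrow> nat) \<Rightarrow> nat \<Rightarrow> (nat list \<Rightarrow> nat \<Rightarrow> nat)
    \<Rightarrow> (nat list \<Rightarrow> complex) \<Rightarrow> nat list \<Rightarrow> complex" where
  "s_op N A i t \<phi> = pi_t t (indicator (cyl N A [i])) (V_sigma N A \<phi>)"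

text \<open>Vectors of l^2(V_A, C^2) are functions nat list => complex * complex
  (first component phi_+, second phi_-).\<close>

definition s_sum :: "nat \<Rightarrow> (nat \<Rightarrow> nat \<Rightarrow> nat) \<Rightarrow> nat \<Rightarrow> (nat list \<Rightarrow> nat \<Rightarrow> nat)
    \<Rightarrow> (nat list \<Rightarrow> nat \<Rightarrow> nat) \<Rightarrow> (nat list \<Rightarrow> complex \<times> complex) \<Rightarrow> nat list \<Rightarrow> complex \<times> complex" where
  "s_sum N A i tp tm \<Phi> v = (s_op N A i tp (fst \<circ> \<Phi>) v, s_op N A i tm (snd \<circ> \<Phi>) v)"

definition l2V :: "nat \<Rightarrow> (nat \<Rightarrow> nat \<Rightarrow> nat) \<Rightarrow> (nat list \<Rightarrow> complex \<times> complex) set" where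
  "l2V N A = {\<Phi>. (\<forall>v. v \<notin> adm_words N A \<longrightarrow> \<Phi> v = 0) \<and> (\<lambda>v. (norm (\<Phi> v))^2) summable_on UNIV}"

definition CcV :: "nat \<Rightarrow> (nat \<Rightarrow> nat \<Rightarrow> nat) \<Rightarrow> (nat list \<Rightarrow> complex \<times> complex) set" where
  "CcV N A = {\<Phi>. (\<forall>v. v \<notin> adm_words N A \<longrightarrow> \<Phi> v = 0) \<and> finite {v. \<Phi> v \<noteq> 0}}"

definition l2norm :: "(nat list \<Rightarrow> complex \<times> complex) \<Rightarrow> real" where
  "l2norm \<Phi> = sqrt (\<Sum>\<^sub>\<infinity>v. (norm (\<Phi> v))^2)"

definition inner2 :: "(nat list \<Rightarrow> complex \<times> complex) \<Rightarrow> (nat list \<Rightarrow> complex \<times> complex) \<Rightarrow> complex" where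
  "inner2 \<Phi> \<Psi> = (\<Sum>\<^sub>\<infinity>v. cnj (fst (\<Phi> v)) * fst (\<Psi> v) + cnj (snd (\<Phi> v)) * snd (\<Psi> v))"

definition adjointV :: "nat \<Rightarrow> (nat \<Rightarrow> nat \<Rightarrow> nat)
    \<Rightarrow> ((nat list \<Rightarrow> complex \<times> complex) \<Rightarrow> (nat list \<Rightarrow> complex \<times> complex))
    \<Rightarrow> (nat list \<Rightarrow> complex \<times> complex) \<Rightarrow> (nat list \<Rightarrow> complex \<times> complex)" where
  "adjointV N A T \<Psi> = (if \<Psi> \<in> l2V N A
      then (THE H. H \<in> l2V N A \<and> (\<forall>\<Phi>\<in>l2V N A. inner2 (T \<Phi>) \<Psi> = inner2 \<Phi> H))
      else (\<lambda>_. 0))"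

text \<open>The Dirac operators, given by their action (on C_c, a core).\<close>

definition D_Vs :: "real \<Rightarrow> (nat list \<Rightarrow> complex \<times> complex) \<Rightarrow> nat list \<Rightarrow> complex \<times> complex" where
  "D_Vs s \<Phi> \<mu> = (complex_of_real (real (length \<mu>) powr s) * snd (\<Phi> \<mu>),
                  complex_of_real (real (length \<mu>) powr s) * fst (\<Phi> \<mu>))"

definition D_BP :: "(nat list \<Rightarrow> complex \<times> complex) \<Rightarrow> nat list \<Rightarrow> complex \<times> complex" where
  "D_BP \<Phi> \<mu> = (complex_of_real (exp (real (length \<mu>))) * snd (\<Phi> \<mu>),
                complex_of_real (exp (real (length \<mu>))) * fst (\<Phi> \<mu>))"

text \<open>[D,T] is bounded: bounded on the core C_c (where it is defined since T preserves C_c).\<close>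

definition bdd_comm :: "nat \<Rightarrow> (nat \<Rightarrow> nat \<Rightarrow> nat)
    \<Rightarrow> ((nat list \<Rightarrow> complex \<times> complex) \<Rightarrow> (nat list \<Rightarrow> complex \<times> complex))
    \<Rightarrow> ((nat list \<Rightarrow> complex \<times> complex) \<Rightarrow> (nat list \<Rightarrow> complex \<times> complex)) \<Rightarrow> bool" where
  "bdd_comm N A D T \<longleftrightarrow> (\<exists>C. \<forall>\<Phi>\<in>CcV N A. l2norm (D (T \<Phi>) - T (D \<Phi>)) \<le> C * l2norm \<Phi>)"

end

theory Submission
  imports Defs "HOL-Real_Asymp.Real_Asymp"
begin

lemma fin_summable:
  fixes f :: "'a \<Rightarrow> 'b::{comm_monoid_add,topological_space}"
  assumes "finite {x. f x \<noteq> 0}" shows "f summable_on UNIV"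
proof -
  have "f summable_on {x. f x \<noteq> 0}" using assms by simp
  then show ?thesis by (rule summable_on_cong_neutral[THEN iffD1, rotated -1]) auto
qed

lemma infsum_Cons:
  fixes h :: "'a list \<Rightarrow> 'b::{comm_monoid_add,t2_space}"
  assumes "\<And>v. v \<notin> range (Cons i) \<Longrightarrow> h v = 0"
  shows "infsum h UNIV = infsum (\<lambda>\<nu>. h (i#\<nu>)) UNIV"
proof -
  have "infsum h UNIV = infsum h (range (Cons i))"
    by (rule infsum_cong_neutral) (use assms in auto)
  also have "\<dots> = infsum (h \<circ> Cons i) UNIV"
    by (rule infsum_reindex) auto
  finally show ?thesis by (simp add: o_def)
qed

definition sw :: "real \<Rightarrow> complex \<times> complex \<Rightarrow> complex \<times> complex" where
  "sw c p = (complex_of_real c * snd p, complex_of_real c * fst p)"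

lemma D_Vs_sw: "D_Vs s \<Phi> \<mu> = sw (real (length \<mu>) powr s) (\<Phi> \<mu>)"
  by (simp add: D_Vs_def sw_def)
lemma D_BP_sw: "D_BP \<Phi> \<mu> = sw (exp (real (length \<mu>))) (\<Phi> \<mu>)"
  by (simp add: D_BP_def sw_def)
lemma sw_diff: "sw a p - sw b p = sw (a - b) p"
  by (simp add: sw_def algebra_simps)
lemma sw_0[simp]: "sw c 0 = 0"
  by (simp add: sw_def zero_prod_def)
lemma norm_sw: "norm (sw c p) = \<bar>c\<bar> * norm p"
proof -
  have "norm ((complex_of_real c * snd p, complex_of_real c * fst p)) = sqrt (c^2 * ((norm (fst p))^2 + (norm (snd p))^2))"
    by (simp add: norm_Pair norm_mult power_mult_distrib algebra_simps)
  also have "\<dots> = \<bar>c\<bar> * sqrt ((norm (fst p))^2 + (norm (snd p))^2)"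
    by (simp add: real_sqrt_mult)
  also have "\<dots> = \<bar>c\<bar> * norm p" by (cases p) (simp add: norm_Pair)
  finally show ?thesis by (simp add: sw_def)
qed
lemma powr_sub_le: fixes s x :: real assumes "0 < s" "s \<le> 1" "0 \<le> x"
  shows "\<bar>(x + 1) powr s - x powr s\<bar> \<le> 1"
proof -
  have ge: "x powr s \<le> (x+1) powr s" using powr_mono2[of s x "x+1"] assms by simp
  have "(x+1) powr s \<le> x powr s + 1"
  proof (cases "x = 0")
    case True then show ?thesis by simp
  next
    case False
    define y where "y = x + 1"
    have y: "y > 0" "x > 0" using False assms by (auto simp: y_def)
    have "x / y \<le> (x/y) powr s"
      using powr_mono'[of s 1 "x/y"] assms y by (simp add: y_def)
    moreover have "1 / y \<le> (1/y) powr s"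
      using powr_mono'[of s 1 "1/y"] assms y by (simp add: y_def)
    ultimately have "x / y + 1 / y \<le> x powr s / y powr s + 1 / y powr s"
      using y by (simp add: powr_divide)
    moreover have "x / y + 1 / y = 1" using y by (simp add: y_def field_simps)
    ultimately have "1 \<le> (x powr s + 1) / y powr s" by (simp add: add_divide_distrib)
    then show ?thesis using y by (simp add: y_def field_simps)
  qed
  then show ?thesis using ge by simp
qed

lemma adm_Cons: "a # \<nu> \<in> adm_words N A \<Longrightarrow> \<nu> \<in> adm_words N A"
  unfolding adm_words_def
proof (safe)
  fix j assume h: "\<forall>j. Suc j < length (a # \<nu>) \<longrightarrow> A ((a # \<nu>) ! j) ((a # \<nu>) ! Suc j) = 1"
    and "Suc j < length \<nu>"
  then show "A (\<nu> ! j) (\<nu> ! Suc j) = 1" using h[rule_format, of "Suc j"] by simp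
qed auto

definition Sop :: "nat \<Rightarrow> (nat \<Rightarrow> nat \<Rightarrow> nat) \<Rightarrow> nat \<Rightarrow> ('x::zero) \<Rightarrow> nat list \<Rightarrow> 'x" where
  "Sop N A i y \<mu> = (if \<mu> \<in> adm_words N A \<and> \<mu> \<noteq> [] \<and> hd \<mu> = i then y else 0)"

lemma s_op_eq:
  assumes "cylinder_condition N A t"
  shows "s_op N A i t \<phi> \<mu> = Sop N A i (\<phi> (tl \<mu>)) \<mu>"
proof (cases "\<mu> \<in> adm_words N A \<and> \<mu> \<noteq> []")
  case True
  then have "t \<mu> \<in> cyl N A \<mu>" using assms by (auto simp: cylinder_condition_def)
  then have "t \<mu> \<in> adm_seqs N A" "t \<mu> 0 = hd \<mu>" using True
    by (auto simp: cyl_def hd_conv_nth)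
  then show ?thesis using True
    by (auto simp: s_op_def pi_t_def V_sigma_def Sop_def cyl_def indicator_def)
next
  case False
  then show ?thesis by (auto simp: s_op_def pi_t_def V_sigma_def Sop_def)
qed

lemma s_sum_eq:
  assumes "cylinder_condition N A tp" "cylinder_condition N A tm"
  shows "s_sum N A i tp tm \<Phi> \<mu> = Sop N A i (\<Phi> (tl \<mu>)) \<mu>"
  using assms by (simp add: s_sum_def s_op_eq Sop_def zero_prod_def)


lemma Sop_Nil[simp]: "Sop N A i y [] = 0" by (simp add: Sop_def)
lemma Sop_Cons[simp]: "Sop N A i y (a#\<nu>) = (if a = i \<and> a#\<nu> \<in> adm_words N A then y else 0)"
  by (auto simp: Sop_def)
lemma Sop_nz: "Sop N A i y \<mu> \<noteq> 0 \<Longrightarrow> \<mu> \<in> range (Cons i) \<and> \<mu> \<in> adm_words N A"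
  by (cases \<mu>) (auto split: if_splits)

lemma infsum_delta: "infsum (\<lambda>w. if w = v then (c::'b::{comm_monoid_add,t2_space}) else 0) UNIV = c"
proof -
  have "infsum (\<lambda>w. if w = v then c else 0) UNIV = infsum (\<lambda>w. if w = v then c else 0) {v}"
    by (rule infsum_cong_neutral) auto
  then show ?thesis by simp
qed

lemma l2norm_delta: "l2norm (\<lambda>w. if w = v then p else 0) = norm p"
proof -
  have "(\<lambda>w. (norm (if w = v then p else 0))^2) = (\<lambda>w. if w = v then (norm p)^2 else 0)"
    by auto
  then show ?thesis by (simp add: l2norm_def infsum_delta)
qed

lemma inner_delta: "inner2 (\<lambda>w. if w = v then p else 0) G = cnj (fst p) * fst (G v) + cnj (snd p) * snd (G v)"
proof -
  have "(\<lambda>w. cnj (fst (if w = v then p else 0)) * fst (G w) + cnj (snd (if w = v then p else 0)) * snd (G w))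
     = (\<lambda>w. if w = v then cnj (fst p) * fst (G v) + cnj (snd p) * snd (G v) else 0)"
    by auto
  then show ?thesis by (simp add: inner2_def infsum_delta)
qed

lemma CcV_l2V: "\<Phi> \<in> CcV N A \<Longrightarrow> \<Phi> \<in> l2V N A"
  unfolding CcV_def l2V_def
  by (auto intro!: fin_summable elim!: finite_subset[rotated])

lemma comm_bound1:
  fixes F G :: "nat list \<Rightarrow> complex \<times> complex"
  assumes "\<And>v. v \<notin> range (Cons i) \<Longrightarrow> F v = 0"
    and "\<And>\<nu>. norm (F (i#\<nu>)) \<le> norm (G \<nu>)" and "finite {\<nu>. G \<nu> \<noteq> 0}"
  shows "l2norm F \<le> l2norm G"
proof -
  have "infsum (\<lambda>v. (norm (F v))^2) UNIV = infsum (\<lambda>\<nu>. (norm (F (i#\<nu>)))^2) UNIV"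
    by (rule infsum_Cons) (use assms(1) in auto)
  also have "\<dots> \<le> infsum (\<lambda>\<nu>. (norm (G \<nu>))^2) UNIV"
  proof (rule infsum_mono)
    have "{\<nu>. (norm (F (i#\<nu>)))^2 \<noteq> 0} \<subseteq> {\<nu>. G \<nu> \<noteq> 0}"
      using assms(2) by (auto) (metis norm_eq_zero norm_le_zero_iff)
    then show "(\<lambda>\<nu>. (norm (F (i#\<nu>)))^2) summable_on UNIV"
      using assms(3) by (intro fin_summable) (rule finite_subset)
    show "(\<lambda>\<nu>. (norm (G \<nu>))^2) summable_on UNIV"
      using assms(3) by (intro fin_summable) simp
    show "\<And>x. x \<in> UNIV \<Longrightarrow> (norm (F (i#x)))^2 \<le> (norm (G x))^2"
      using assms(2) by (simp add: power_mono)
  qed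
  finally show ?thesis unfolding l2norm_def by (rule real_sqrt_le_mono)
qed

lemma comm_bound2:
  fixes F G :: "nat list \<Rightarrow> complex \<times> complex"
  assumes "\<And>\<nu>. norm (F \<nu>) \<le> norm (G (i#\<nu>))" and "finite {v. G v \<noteq> 0}"
  shows "l2norm F \<le> l2norm G"
proof -
  have fin: "finite {\<nu>. G (i#\<nu>) \<noteq> 0}"
    using finite_vimageI[OF assms(2), of "Cons i"] by (simp add: vimage_def)
  have "infsum (\<lambda>v. (norm (F v))^2) UNIV \<le> infsum (\<lambda>\<nu>. (norm (G (i#\<nu>)))^2) UNIV"
  proof (rule infsum_mono)
    have "{\<nu>. (norm (F \<nu>))^2 \<noteq> 0} \<subseteq> {\<nu>. G (i#\<nu>) \<noteq> 0}"
      using assms(1) by (auto) (metis norm_eq_zero norm_le_zero_iff)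
    then show "(\<lambda>\<nu>. (norm (F \<nu>))^2) summable_on UNIV"
      using fin by (intro fin_summable) (rule finite_subset)
    show "(\<lambda>\<nu>. (norm (G (i#\<nu>)))^2) summable_on UNIV"
      using fin by (intro fin_summable) simp
    show "\<And>x. x \<in> UNIV \<Longrightarrow> (norm (F x))^2 \<le> (norm (G (i#x)))^2"
      using assms(1) by (simp add: power_mono)
  qed
  also have "infsum (\<lambda>\<nu>. (norm (G (i#\<nu>)))^2) UNIV
      = infsum (\<lambda>v. if v \<in> range (Cons i) then (norm (G v))^2 else 0) UNIV"
    by (subst infsum_Cons[where i=i]) auto
  also have "\<dots> \<le> infsum (\<lambda>v. (norm (G v))^2) UNIV"
  proof (rule infsum_mono)
    show "(\<lambda>v. if v \<in> range (Cons i) then (norm (G v))^2 else 0) summable_on UNIV"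
      using assms(2) by (intro fin_summable) (auto elim!: finite_subset[rotated])
    show "(\<lambda>v. (norm (G v))^2) summable_on UNIV"
      using assms(2) by (intro fin_summable) simp
  qed auto
  finally show ?thesis unfolding l2norm_def by (rule real_sqrt_le_mono)
qed


definition Hop :: "nat \<Rightarrow> (nat \<Rightarrow> nat \<Rightarrow> nat) \<Rightarrow> nat \<Rightarrow> (nat list \<Rightarrow> complex \<times> complex) \<Rightarrow> nat list \<Rightarrow> complex \<times> complex" where
  "Hop N A i \<Psi> \<nu> = (if i#\<nu> \<in> adm_words N A then \<Psi> (i#\<nu>) else 0)"

lemma Hop_CcV: "\<Psi> \<in> CcV N A \<Longrightarrow> Hop N A i \<Psi> \<in> CcV N A"
proof -
  assume a: "\<Psi> \<in> CcV N A"
  have "{\<nu>. Hop N A i \<Psi> \<nu> \<noteq> 0} \<subseteq> Cons i -` {v. \<Psi> v \<noteq> 0}"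
    by (auto simp: Hop_def split: if_splits)
  moreover have "finite (Cons i -` {v. \<Psi> v \<noteq> 0})"
    using a by (intro finite_vimageI) (auto simp: CcV_def)
  ultimately show ?thesis using a adm_Cons
    by (auto simp: CcV_def Hop_def intro: finite_subset)
qed

lemma adj_eq:
  assumes Teq: "\<And>\<Phi> \<mu>. T \<Phi> \<mu> = Sop N A i (\<Phi> (tl \<mu>)) \<mu>" and "\<Psi> \<in> CcV N A"
  shows "adjointV N A T \<Psi> = Hop N A i \<Psi>"
proof -
  have l2: "\<Psi> \<in> l2V N A" using assms(2) by (rule CcV_l2V)
  have HC: "Hop N A i \<Psi> \<in> CcV N A" using assms(2) by (rule Hop_CcV)
  have inn: "inner2 (T \<Phi>) \<Psi> = inner2 \<Phi> (Hop N A i \<Psi>)" for \<Phi>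
  proof -
    have "inner2 (T \<Phi>) \<Psi> = infsum (\<lambda>\<nu>. cnj (fst (T \<Phi> (i#\<nu>))) * fst (\<Psi> (i#\<nu>))
        + cnj (snd (T \<Phi> (i#\<nu>))) * snd (\<Psi> (i#\<nu>))) UNIV"
      unfolding inner2_def
    proof (rule infsum_Cons)
      fix v assume "v \<notin> range (Cons i)"
      then have "T \<Phi> v = 0" using Sop_nz Teq by metis
      then show "cnj (fst (T \<Phi> v)) * fst (\<Psi> v) + cnj (snd (T \<Phi> v)) * snd (\<Psi> v) = 0" by simp
    qed
    also have "\<dots> = inner2 \<Phi> (Hop N A i \<Psi>)"
      unfolding inner2_def by (rule infsum_cong) (simp add: Teq Hop_def)
    finally show ?thesis .
  qed
  have uniq: "G = Hop N A i \<Psi>" if G: "G \<in> l2V N A" "\<forall>\<Phi>\<in>l2V N A. inner2 (T \<Phi>) \<Psi> = inner2 \<Phi> G" for G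
  proof
    fix v
    show "G v = Hop N A i \<Psi> v"
    proof (cases "v \<in> adm_words N A")
      case False
      then show ?thesis using G HC by (auto simp: l2V_def CcV_def)
    next
      case True
      have d: "(\<lambda>w. if w = v then p else 0) \<in> l2V N A" for p :: "complex \<times> complex"
        by (rule CcV_l2V) (use True in \<open>auto simp: CcV_def\<close>)
      have "inner2 (\<lambda>w. if w = v then p else 0) G = inner2 (\<lambda>w. if w = v then p else 0) (Hop N A i \<Psi>)" for p
        using G(2) d inn by metis
      from this[of "(1,0)"] this[of "(0,1)"] show ?thesis
        by (simp add: inner_delta prod_eq_iff)
    qed
  qed
  have "(THE H. H \<in> l2V N A \<and> (\<forall>\<Phi>\<in>l2V N A. inner2 (T \<Phi>) \<Psi> = inner2 \<Phi> H)) = Hop N A i \<Psi>"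
    by (rule the_equality) (use CcV_l2V[OF HC] inn uniq in blast)+
  then show ?thesis unfolding adjointV_def using l2 by simp
qed

primrec walk :: "nat \<Rightarrow> (nat \<Rightarrow> nat \<Rightarrow> nat) \<Rightarrow> nat \<Rightarrow> nat \<Rightarrow> nat" where
  "walk N A i 0 = i"
| "walk N A i (Suc n) = (SOME b. b \<in> {1..N} \<and> A (walk N A i n) b = 1)"

lemma walk_prop:
  assumes "\<forall>a\<in>{1..N}. \<exists>b\<in>{1..N}. A a b = 1" "i \<in> {1..N}"
  shows "walk N A i n \<in> {1..N} \<and> A (walk N A i n) (walk N A i (Suc n)) = 1"
proof (induction n)
  case 0
  have "\<exists>b. b \<in> {1..N} \<and> A i b = 1" using assms by blast
  from someI_ex[OF this] show ?case using assms(2) by simp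
next
  case (Suc n)
  have "\<exists>b. b \<in> {1..N} \<and> A (walk N A i n) b = 1" using assms Suc.IH by blast
  from someI_ex[OF this] have w: "walk N A i (Suc n) \<in> {1..N}" by simp
  have "\<exists>b. b \<in> {1..N} \<and> A (walk N A i (Suc n)) b = 1" using assms w by blast
  from someI_ex[OF this] show ?case using w by simp
qed

lemma walk_adm:
  assumes "\<forall>a\<in>{1..N}. \<exists>b\<in>{1..N}. A a b = 1" "i \<in> {1..N}"
  shows "map (walk N A i) [0..<Suc k] \<in> adm_words N A"
  unfolding adm_words_def
proof (intro CollectI conjI allI impI)
  show "set (map (walk N A i) [0..<Suc k]) \<subseteq> {1..N}"
    using walk_prop[OF assms] by (auto simp del: upt_Suc)
  fix j assume "Suc j < length (map (walk N A i) [0..<Suc k])"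
  then have "Suc j < Suc k" by simp
  then show "A (map (walk N A i) [0..<Suc k] ! j) (map (walk N A i) [0..<Suc k] ! Suc j) = 1"
    using walk_prop[OF assms, of j] by (simp del: upt_Suc)
qed


lemma D_Vs_CcV: "\<Phi> \<in> CcV N A \<Longrightarrow> D_Vs s \<Phi> \<in> CcV N A"
  unfolding CcV_def
  by (auto simp: D_Vs_sw elim!: finite_subset[rotated])

theorem proposition4p18:
  fixes N :: nat and A :: "nat \<Rightarrow> nat \<Rightarrow> nat"
    and tp tm :: "nat list \<Rightarrow> nat \<Rightarrow> nat" and i :: nat
  assumes "\<forall>a\<in>{1..N}. \<forall>b\<in>{1..N}. A a b \<in> {0, 1}"
    and "\<forall>a\<in>{1..N}. \<exists>b\<in>{1..N}. A a b = 1"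
    and "\<forall>b\<in>{1..N}. \<exists>a\<in>{1..N}. A a b = 1"
    and "cylinder_condition N A tp" and "cylinder_condition N A tm"
    and "i \<in> {1..N}"
  shows "s_sum N A i tp tm ` CcV N A \<subseteq> CcV N A
       \<and> adjointV N A (s_sum N A i tp tm) ` CcV N A \<subseteq> CcV N A
       \<and> (\<forall>s. 0 < s \<and> s \<le> 1 \<longrightarrow>
            bdd_comm N A (D_Vs s) (s_sum N A i tp tm)
          \<and> bdd_comm N A (D_Vs s) (adjointV N A (s_sum N A i tp tm)))
       \<and> (\<exists>f :: nat \<Rightarrow> nat list \<Rightarrow> complex \<times> complex.
            (\<forall>k. f k \<in> CcV N A \<and> l2norm (f k) = 1)
          \<and> filterlim (\<lambda>k. l2norm (D_BP (s_sum N A i tp tm (f k)) - s_sum N A i tp tm (D_BP (f k))))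
              at_top sequentially)"
proof -
  define T where "T = s_sum N A i tp tm"
  have Teq: "\<And>\<Phi> \<mu>. T \<Phi> \<mu> = Sop N A i (\<Phi> (tl \<mu>)) \<mu>"
    unfolding T_def using assms(4,5) by (rule s_sum_eq)
  have P1: "T ` CcV N A \<subseteq> CcV N A"
  proof
    fix \<Psi> assume "\<Psi> \<in> T ` CcV N A"
    then obtain \<Phi> where \<Phi>: "\<Phi> \<in> CcV N A" and \<Psi>: "\<Psi> = T \<Phi>" by blast
    have "{\<mu>. T \<Phi> \<mu> \<noteq> 0} \<subseteq> Cons i ` {\<nu>. \<Phi> \<nu> \<noteq> 0}"
    proof
      fix \<mu> assume "\<mu> \<in> {\<mu>. T \<Phi> \<mu> \<noteq> 0}"
      then show "\<mu> \<in> Cons i ` {\<nu>. \<Phi> \<nu> \<noteq> 0}"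
        by (cases \<mu>) (auto simp: Teq split: if_splits)
    qed
    moreover have "finite (Cons i ` {\<nu>. \<Phi> \<nu> \<noteq> 0})" using \<Phi> by (simp add: CcV_def)
    moreover have "\<forall>v. v \<notin> adm_words N A \<longrightarrow> T \<Phi> v = 0"
      using Sop_nz Teq by metis
    ultimately show "\<Psi> \<in> CcV N A" unfolding \<Psi> CcV_def by (auto intro: finite_subset)
  qed
  have adjE: "\<And>\<Psi>. \<Psi> \<in> CcV N A \<Longrightarrow> adjointV N A T \<Psi> = Hop N A i \<Psi>"
    using Teq by (rule adj_eq)
  have P2: "adjointV N A T ` CcV N A \<subseteq> CcV N A"
    using adjE Hop_CcV by auto
  have P3: "bdd_comm N A (D_Vs s) T \<and> bdd_comm N A (D_Vs s) (adjointV N A T)"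
    if s: "0 < s" "s \<le> 1" for s
  proof
    show "bdd_comm N A (D_Vs s) T"
      unfolding bdd_comm_def
    proof (intro exI[of _ 1] ballI)
      fix \<Phi> assume \<Phi>: "\<Phi> \<in> CcV N A"
      have "l2norm (D_Vs s (T \<Phi>) - T (D_Vs s \<Phi>)) \<le> l2norm \<Phi>"
      proof (rule comm_bound1[where i=i])
        fix v :: "nat list" assume "v \<notin> range (Cons i)"
        then show "(D_Vs s (T \<Phi>) - T (D_Vs s \<Phi>)) v = 0"
          by (cases v) (auto simp: fun_diff_def D_Vs_sw Teq)
      next
        fix \<nu> :: "nat list"
        have "\<bar>real (Suc (length \<nu>)) powr s - real (length \<nu>) powr s\<bar> \<le> 1"
          using powr_sub_le[OF s, of "real (length \<nu>)"] by (simp add: add.commute)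
        then show "norm ((D_Vs s (T \<Phi>) - T (D_Vs s \<Phi>)) (i#\<nu>)) \<le> norm (\<Phi> \<nu>)"
          by (auto simp: fun_diff_def D_Vs_sw Teq sw_diff norm_sw intro: mult_left_le_one_le)
      next
        show "finite {\<nu>. \<Phi> \<nu> \<noteq> 0}" using \<Phi> by (simp add: CcV_def)
      qed
      then show "l2norm (D_Vs s (T \<Phi>) - T (D_Vs s \<Phi>)) \<le> 1 * l2norm \<Phi>" by simp
    qed
    show "bdd_comm N A (D_Vs s) (adjointV N A T)"
      unfolding bdd_comm_def
    proof (intro exI[of _ 1] ballI)
      fix \<Phi> assume \<Phi>: "\<Phi> \<in> CcV N A"
      have e1: "adjointV N A T \<Phi> = Hop N A i \<Phi>" using adjE \<Phi> by blast
      have e2: "adjointV N A T (D_Vs s \<Phi>) = Hop N A i (D_Vs s \<Phi>)" using adjE D_Vs_CcV \<Phi> by blast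
      have "l2norm (D_Vs s (Hop N A i \<Phi>) - Hop N A i (D_Vs s \<Phi>)) \<le> l2norm \<Phi>"
      proof (rule comm_bound2[where i=i])
        fix \<nu> :: "nat list"
        have "\<bar>real (Suc (length \<nu>)) powr s - real (length \<nu>) powr s\<bar> \<le> 1"
          using powr_sub_le[OF s, of "real (length \<nu>)"] by (simp add: add.commute)
        then have "\<bar>real (length \<nu>) powr s - real (Suc (length \<nu>)) powr s\<bar> \<le> 1"
          by (simp add: abs_minus_commute)
        then show "norm ((D_Vs s (Hop N A i \<Phi>) - Hop N A i (D_Vs s \<Phi>)) \<nu>) \<le> norm (\<Phi> (i#\<nu>))"
          by (auto simp: fun_diff_def D_Vs_sw Hop_def sw_diff norm_sw intro: mult_left_le_one_le)
      next
        show "finite {v. \<Phi> v \<noteq> 0}" using \<Phi> by (simp add: CcV_def)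
      qed
      then show "l2norm (D_Vs s (adjointV N A T \<Phi>) - adjointV N A T (D_Vs s \<Phi>)) \<le> 1 * l2norm \<Phi>"
        by (simp add: e1 e2)
    qed
  qed
  define \<nu> where "\<nu> k = map (walk N A i) [1..<Suc k]" for k
  have W: "i # \<nu> k = map (walk N A i) [0..<Suc k]" for k
    by (simp add: \<nu>_def upt_conv_Cons del: upt_Suc)
  have len: "length (\<nu> k) = k" for k by (simp add: \<nu>_def)
  have admW: "i # \<nu> k \<in> adm_words N A" for k
    unfolding W using walk_adm[OF assms(2,6)] .
  have adm\<nu>: "\<nu> k \<in> adm_words N A" for k using admW adm_Cons by blast
  define f where "f k = (\<lambda>w. if w = \<nu> k then ((1::complex),(0::complex)) else 0)" for k
  have fC: "f k \<in> CcV N A \<and> l2norm (f k) = 1" for k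
  proof
    show "f k \<in> CcV N A" unfolding CcV_def f_def using adm\<nu>
      by (auto intro: finite_subset[of _ "{\<nu> k}"])
    show "l2norm (f k) = 1" unfolding f_def l2norm_delta by (simp add: norm_Pair)
  qed
  have comm: "D_BP (T (f k)) - T (D_BP (f k))
      = (\<lambda>\<mu>. if \<mu> = i # \<nu> k then sw (exp (real (Suc k)) - exp (real k)) (1,0) else 0)" for k
  proof
    fix \<mu> :: "nat list"
    show "(D_BP (T (f k)) - T (D_BP (f k))) \<mu>
       = (if \<mu> = i # \<nu> k then sw (exp (real (Suc k)) - exp (real k)) (1,0) else 0)"
    proof (cases "\<mu> = i # \<nu> k")
      case True
      then show ?thesis using admW[of k] len[of k]
        by (simp add: fun_diff_def D_BP_sw Teq sw_diff f_def)
    next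
      case False
      then show ?thesis
        by (cases \<mu>) (auto simp: fun_diff_def D_BP_sw Teq f_def)
    qed
  qed
  have P4: "filterlim (\<lambda>k. l2norm (D_BP (T (f k)) - T (D_BP (f k)))) at_top sequentially"
  proof -
    have "filterlim (\<lambda>k::nat. \<bar>exp (real (Suc k)) - exp (real k)\<bar> * 1) at_top sequentially"
      by real_asymp
    then show ?thesis
      unfolding comm l2norm_delta norm_sw by (simp add: norm_Pair)
  qed
  show ?thesis unfolding T_def[symmetric]
    using P1 P2 P3 P4 fC by blast
qed

end
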